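(* Let $f:\mathbb{R}^2\times\mathbb{R}\to\mathbb{R}$ be continuously differentiable, and let $(a,b)\in\mathbb{R}^2\times\mathbb{R}$ satisfy $f(a,b)=0$ and $\partial_y f(a,b)\neq 0$. Let $U\subset\mathbb{R}^2$ be a closed rectangle (sides parallel to the coordinate axes) containing $a$ and $V\subset\mathbb{R}$ a closed bounded interval containing $b$, and let $g:U\to V$ be a function such that $f(x,g(x))=0$ for all $x\in U$. Assume that for each $x\in U$ the function $y\mapsto \mathrm{sign}(f(x,y))$ on $V$ is a single-step function, and that the constant $\rho\in\{1,-1\}$ is defined by: $\rho=1$ if these step functions are increasing in $y$, and $\rho=-1$ if they are decreasing (this is the same for all $x\in U$). For a subrectangle $R\subseteq U$ define $$\mu(R)=\int_{R\times V}\Theta(f(x,y))\,dx\,dy,$$ where $\Theta(t)=1$ for $t\ge 0$ and $\Theta(t)=0$ for $t<0$, and $dx\,dy$ is Lebesgue measure. Then for every subrectangle $R$ of $U$, $$\int_R g\,dx=|R|\,(\max V)^{\frac{\rho+1}{2}}(\min V)^{\frac{1-\rho}{2}}-\rho\,\mu(R),$$ where $|R|$ denotes the area of $R$ (and a factor raised to the exponent $0$ is read as $1$).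
   Context: All rectangles are parallel to the coordinate axes. The existence of $U$, $V$ and a unique continuously differentiable $g:U\to V$ with $f(x,g(x))=0$ is provided by the implicit function theorem; $f$ is regarded on $U\times V$. *)

theory Defs
  imports "HOL-Analysis.Analysis"
begin

definition Theta :: "real \<Rightarrow> real" where
  "Theta t = (if t \<ge> 0 then 1 else 0)"

definition single_step_on :: "real set \<Rightarrow> (real \<Rightarrow> real) \<Rightarrow> bool" where
  "single_step_on V h \<longleftrightarrow>
     (\<exists>t\<in>V. \<exists>u v. u \<noteq> v \<and> (\<forall>y\<in>V. y < t \<longrightarrow> h y = u) \<and> (\<forall>y\<in>V. t < y \<longrightarrow> h y = v))"

end

theory Submission
  imports Defs
begin

theorem lemma1:
  fixes f :: "(real \<times> real) \<times> real \<Rightarrow> real"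
    and a :: "real \<times> real" and b :: real
    and u1 u2 v1 v2 c d :: real
    and g :: "real \<times> real \<Rightarrow> real"
    and \<rho> :: int
  assumes C1: "\<exists>f'. (\<forall>z. (f has_derivative blinfun_apply (f' z)) (at z)) \<and> continuous_on UNIV f'"
    and zero: "f (a, b) = 0"
    and partial: "deriv (\<lambda>y. f (a, y)) b \<noteq> 0"
    and U: "U = {u1..u2} \<times> {v1..v2}" and aU: "a \<in> U"
    and V: "V = {c..d}" and bV: "b \<in> V"
    and gUV: "\<forall>x\<in>U. g x \<in> V"
    and groot: "\<forall>x\<in>U. f (x, g x) = 0"
    and guniq: "\<forall>x\<in>U. \<forall>y\<in>V. f (x, y) = 0 \<longrightarrow> y = g x"
    and step: "\<forall>x\<in>U. single_step_on V (\<lambda>y. sgn (f (x, y)))"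
    and rho: "\<rho> \<in> {1, -1}"
    and incr: "\<rho> = 1 \<Longrightarrow> \<forall>x\<in>U. monotone_on V (\<le>) (\<le>) (\<lambda>y. sgn (f (x, y)))"
    and decr: "\<rho> = -1 \<Longrightarrow> \<forall>x\<in>U. monotone_on V (\<le>) (\<ge>) (\<lambda>y. sgn (f (x, y)))"
    and R: "R = {r1..r2} \<times> {s1..s2}" and RU: "R \<subseteq> U"
  shows "(LINT x:R|lborel. g x) =
           measure lborel R * d ^ nat ((\<rho> + 1) div 2) * c ^ nat ((1 - \<rho>) div 2)
           - of_int \<rho> * (LINT z:(R \<times> V)|lborel. Theta (f z))"
proof -
  have fcont: "continuous_on UNIV f"
    using C1 by (metis continuous_at_imp_continuous_on has_derivative_continuous)
  define S where "S = (R \<times> V) \<inter> {z. 0 \<le> f z}"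
  have closedS: "closed S" unfolding S_def R V
    by (intro closed_Int closed_Times closed_atLeastAtMost closed_Collect_le fcont continuous_on_const)
  have bS: "bounded S" unfolding S_def R V
    by (intro bounded_Int disjI1 bounded_Times compact_imp_bounded compact_Icc)
  have Smeas[measurable]: "S \<in> sets lborel" using closedS by simp
  have Sfin: "emeasure lborel S < \<infinity>"
    using bS by (rule emeasure_bounded_finite)
  have eqF: "(\<lambda>z. indicator (R \<times> V) z *\<^sub>R Theta (f z)) = indicator S"
    by (auto simp: S_def Theta_def indicator_def fun_eq_iff)
  have mu: "(LINT z:(R \<times> V)|lborel. Theta (f z)) = integral\<^sup>L (lborel \<Otimes>\<^sub>M lborel) (indicator S)"
    unfolding set_lebesgue_integral_def eqF lborel_prod by simp
  have intS: "integrable (lborel \<Otimes>\<^sub>M lborel) (indicator S :: _ \<Rightarrow> real)"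
    unfolding lborel_prod using Smeas Sfin by (simp add: integrable_indicator_iff)
  define H where "H x = (if \<rho> = 1 then d - g x else g x - c)" for x
  have key: "0 \<le> f (x, y) \<longleftrightarrow> (if \<rho> = 1 then g x \<le> y else y \<le> g x)" if "x \<in> U" "y \<in> V" for x y
  proof -
    have gxV: "g x \<in> V" and f0: "f (x, g x) = 0" using gUV groot that by auto
    show ?thesis
    proof (cases "y = g x")
      case True
      then show ?thesis using f0 by simp
    next
      case False
      then have fn: "f (x, y) \<noteq> 0" using guniq that by auto
      show ?thesis
      proof (cases "\<rho> = 1")
        case True
        then have m: "monotone_on V (\<le>) (\<le>) (\<lambda>y. sgn (f (x, y)))" using incr that by auto
        have "y < g x \<Longrightarrow> sgn (f (x, y)) \<le> sgn (f (x, g x))"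
          using m gxV that(2) unfolding monotone_on_def by auto
        moreover have "g x < y \<Longrightarrow> sgn (f (x, g x)) \<le> sgn (f (x, y))"
          using m gxV that(2) unfolding monotone_on_def by auto
        ultimately show ?thesis using True False fn f0
          by (cases "y < g x") (auto simp: sgn_if split: if_splits)
      next
        case nt: False
        then have "\<rho> = -1" using rho by auto
        then have m: "monotone_on V (\<le>) (\<ge>) (\<lambda>y. sgn (f (x, y)))" using decr that by auto
        have "y < g x \<Longrightarrow> sgn (f (x, y)) \<ge> sgn (f (x, g x))"
          using m gxV that(2) unfolding monotone_on_def by auto
        moreover have "g x < y \<Longrightarrow> sgn (f (x, g x)) \<ge> sgn (f (x, y))"
          using m gxV that(2) unfolding monotone_on_def by auto
        ultimately show ?thesis using nt False fn f0
          by (cases "y < g x") (auto simp: sgn_if split: if_splits)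
      qed
    qed
  qed
  have inner: "(\<integral>y. indicator S (x, y) \<partial>lborel) = indicator R x * H x" for x
  proof (cases "x \<in> R")
    case False
    then show ?thesis by (simp add: S_def indicator_def)
  next
    case True
    then have xU: "x \<in> U" using RU by auto
    have gx: "c \<le> g x" "g x \<le> d" using gUV xU V by auto
    have "(\<lambda>y. indicator S (x, y) :: real) = indicator (if \<rho> = 1 then {g x..d} else {c..g x})"
      using key[OF xU] True gx unfolding S_def V
      by (auto simp: indicator_def fun_eq_iff)
    then have "(\<integral>y. (indicator S (x, y) :: real) \<partial>lborel) = integral\<^sup>L lborel (indicator (if \<rho> = 1 then {g x..d} else {c..g x}))"
      by (metis (no_types))
    then show ?thesis using True gx by (simp add: H_def)
  qed
  have intH: "integrable lborel (\<lambda>x. indicator R x * H x)"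
    using lborel_pair.integrable_fst'[OF intS] unfolding inner .
  have fub: "integral\<^sup>L lborel (\<lambda>x. indicator R x * H x) = integral\<^sup>L (lborel \<Otimes>\<^sub>M lborel) (indicator S)"
    using lborel_pair.integral_fst'[OF intS] unfolding inner .
  have Rmeas: "R \<in> sets lborel" unfolding R sets_lborel by (intro borel_closed closed_Times closed_atLeastAtMost)
  have Rfin: "emeasure lborel R \<noteq> \<infinity>" unfolding R
    by (metis bounded_Times compact_Icc compact_imp_bounded emeasure_bounded_finite less_irrefl)
  have intc: "integrable lborel (\<lambda>x. indicator R x * k)" for k :: real
    using Rmeas Rfin by (simp add: integrable_indicator_iff less_top)
  have gform: "(\<lambda>x. indicator R x * g x) = (\<lambda>x. indicator R x * (if \<rho> = 1 then d else c) - (if \<rho> = 1 then 1 else -1) * (indicator R x * H x))"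
    by (auto simp: fun_eq_iff H_def indicator_def)
  have "(LINT x:R|lborel. g x) = integral\<^sup>L lborel (\<lambda>x. indicator R x * g x)"
    unfolding set_lebesgue_integral_def by simp
  also have "\<dots> = integral\<^sup>L lborel (\<lambda>x. indicator R x * (if \<rho> = 1 then d else c)) - (if \<rho> = 1 then 1 else -1) * integral\<^sup>L lborel (\<lambda>x. indicator R x * H x)"
    unfolding gform using intc intH by simp
  also have "\<dots> = measure lborel R * (if \<rho> = 1 then d else c) - (if \<rho> = 1 then 1 else -1) * (LINT z:(R \<times> V)|lborel. Theta (f z))"
    unfolding mu fub[symmetric] by simp
  finally show ?thesis using rho by auto
qed

end
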